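(* Let $K$ be an algebraically closed field of characteristic $p>0$, $p\neq 2$, and $n\geq 4$. Let $G_\psi\subset\mathrm{Aut}_0K[x_1,\ldots,x_n]$ be the subgroup generated by $\mathrm{GL}_n(K)$ and the automorphism $\psi: x_1\mapsto x_1+x_2x_3$, $x_k\mapsto x_k$ ($k\neq 1$). Then $G_\psi$ contains: (i) for each $i=1,\ldots,n$, the automorphism $\psi_i: x_i\mapsto x_i+x_{i+1}x_{i+2}$, $x_k\mapsto x_k$ ($k\neq i$), with indices taken cyclically modulo $n$; and (ii) every automorphism $\varphi_{i,j,k,\beta}: x_i\mapsto x_i+\beta x_j^k$, $x_l\mapsto x_l$ ($l\neq i$), where $k\geq 1$, $\beta\in K$, $i,j\in\{1,\ldots,n\}$, $j\neq i$.
   Context: $\mathrm{Aut}_0 K[x_1,\ldots,x_n]$ is the group of origin-preserving $K$-algebra automorphisms of $K[x_1,\ldots,x_n]$; $\mathrm{GL}_n(K)$ is its subgroup of linear automorphisms $x_i\mapsto\sum_j a_{ij}x_j$. *)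

theory Defs
  imports "HOL-Library.Poly_Mapping" "HOL-Computational_Algebra.Polynomial"
begin

text \<open>The ring K[x_1,...,x_n] is modelled by the polynomials using only x_0..x_(n-1).\<close>

type_synonym 'a mpoly = "(nat \<Rightarrow>\<^sub>0 nat) \<Rightarrow>\<^sub>0 'a"

definition mVar :: "nat \<Rightarrow> 'a::comm_ring_1 mpoly" where
  "mVar i = Poly_Mapping.single (Poly_Mapping.single i 1) 1"

definition mConst :: "'a::comm_ring_1 \<Rightarrow> 'a mpoly" where
  "mConst c = Poly_Mapping.single 0 c"

definition in_vars :: "nat \<Rightarrow> 'a::comm_ring_1 mpoly \<Rightarrow> bool" where
  "in_vars n p \<longleftrightarrow> (\<forall>m\<in>Poly_Mapping.keys p. \<forall>i\<in>Poly_Mapping.keys m. i < n)"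

definition msubst :: "(nat \<Rightarrow> 'a::comm_ring_1 mpoly) \<Rightarrow> 'a mpoly \<Rightarrow> 'a mpoly" where
  "msubst s p = (\<Sum>m\<in>Poly_Mapping.keys p. mConst (Poly_Mapping.lookup p m) * (\<Prod>i\<in>Poly_Mapping.keys m. s i ^ Poly_Mapping.lookup m i))"

text \<open>An endomorphism of K[x_0..x_(n-1)] is given by the images of the variables;
  variables outside the range are fixed (normalisation).\<close>
definition is_endo :: "nat \<Rightarrow> (nat \<Rightarrow> 'a::comm_ring_1 mpoly) \<Rightarrow> bool" where
  "is_endo n s \<longleftrightarrow> (\<forall>i<n. in_vars n (s i)) \<and> (\<forall>i\<ge>n. s i = mVar i)"

text \<open>Composition: (comp s t) corresponds to phi_s \<circ> phi_t.\<close>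
definition mcomp :: "(nat \<Rightarrow> 'a::comm_ring_1 mpoly) \<Rightarrow> (nat \<Rightarrow> 'a mpoly) \<Rightarrow> nat \<Rightarrow> 'a mpoly" where
  "mcomp s t = (\<lambda>i. msubst s (t i))"

definition is_aut :: "nat \<Rightarrow> (nat \<Rightarrow> 'a::comm_ring_1 mpoly) \<Rightarrow> bool" where
  "is_aut n s \<longleftrightarrow> is_endo n s \<and>
     (\<exists>t. is_endo n t \<and> mcomp s t = mVar \<and> mcomp t s = mVar)"

definition is_linear_aut :: "nat \<Rightarrow> (nat \<Rightarrow> 'a::comm_ring_1 mpoly) \<Rightarrow> bool" where
  "is_linear_aut n s \<longleftrightarrow> is_aut n s \<and>
     (\<exists>a::nat \<Rightarrow> nat \<Rightarrow> 'a. \<forall>i<n. s i = (\<Sum>j<n. mConst (a i j) * mVar j))"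

text \<open>psi: x_0 \<mapsto> x_0 + x_1 x_2 (0-based indexing of x_1 \<mapsto> x_1 + x_2 x_3).\<close>
definition psi :: "'a::comm_ring_1 itself \<Rightarrow> nat \<Rightarrow> 'a mpoly" where
  "psi _ = (mVar :: nat \<Rightarrow> 'a mpoly)(0 := mVar 0 + mVar 1 * mVar 2)"

definition psi_i :: "'a::comm_ring_1 itself \<Rightarrow> nat \<Rightarrow> nat \<Rightarrow> nat \<Rightarrow> 'a mpoly" where
  "psi_i _ n i = (mVar :: nat \<Rightarrow> 'a mpoly)(i := mVar i + mVar ((i+1) mod n) * mVar ((i+2) mod n))"

definition phi :: "nat \<Rightarrow> nat \<Rightarrow> nat \<Rightarrow> 'a::comm_ring_1 \<Rightarrow> nat \<Rightarrow> 'a mpoly" where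
  "phi i j k \<beta> = mVar(i := mVar i + mConst \<beta> * mVar j ^ k)"

inductive_set G_psi :: "'a::comm_ring_1 itself \<Rightarrow> nat \<Rightarrow> (nat \<Rightarrow> 'a mpoly) set"
  for T :: "'a itself" and n :: nat where
  ident: "mVar \<in> G_psi T n"
| lin: "is_linear_aut n s \<Longrightarrow> s \<in> G_psi T n"
| gen: "psi T \<in> G_psi T n"
| comp: "s \<in> G_psi T n \<Longrightarrow> t \<in> G_psi T n \<Longrightarrow> mcomp s t \<in> G_psi T n"
| inv: "s \<in> G_psi T n \<Longrightarrow> is_endo n t \<Longrightarrow> mcomp s t = mVar \<Longrightarrow> mcomp t s = mVar
        \<Longrightarrow> t \<in> G_psi T n"

end

theory Submission
  imports Defs
begin

definition MM :: "(nat \<Rightarrow> 'a::comm_ring_1 mpoly) \<Rightarrow> (nat \<Rightarrow>\<^sub>0 nat) \<Rightarrow> 'a mpoly" where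
  "MM s m = (\<Prod>i\<in>Poly_Mapping.keys m. s i ^ Poly_Mapping.lookup m i)"

lemma keys_add_nat: "Poly_Mapping.keys (a + b :: nat \<Rightarrow>\<^sub>0 nat) = Poly_Mapping.keys a \<union> Poly_Mapping.keys b"
  by (auto simp: in_keys_iff lookup_add)

lemma MM_superset: "finite S \<Longrightarrow> Poly_Mapping.keys m \<subseteq> S \<Longrightarrow>
   MM s m = (\<Prod>i\<in>S. s i ^ Poly_Mapping.lookup m i)"
  unfolding MM_def by (rule prod.mono_neutral_left) (auto simp: in_keys_iff)

lemma MM_add: "MM s (a + b) = MM s a * MM s b"
proof -
  let ?S = "Poly_Mapping.keys a \<union> Poly_Mapping.keys b"
  have "MM s (a + b) = (\<Prod>i\<in>?S. s i ^ Poly_Mapping.lookup (a+b) i)"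
    by (rule MM_superset) (auto simp: keys_add_nat)
  also have "\<dots> = (\<Prod>i\<in>?S. s i ^ Poly_Mapping.lookup a i) * (\<Prod>i\<in>?S. s i ^ Poly_Mapping.lookup b i)"
    by (simp add: lookup_add power_add prod.distrib)
  also have "\<dots> = MM s a * MM s b"
    by (simp add: MM_superset[symmetric])
  finally show ?thesis .
qed

lemma MM_zero[simp]: "MM s 0 = 1" by (simp add: MM_def)

lemma msubst_MM: "msubst s p = (\<Sum>m\<in>Poly_Mapping.keys p. mConst (Poly_Mapping.lookup p m) * MM s m)"
  by (simp add: msubst_def MM_def)

lemma mConst_0[simp]: "mConst 0 = 0" by (simp add: mConst_def)
lemma mConst_1[simp]: "mConst 1 = 1" by (simp add: mConst_def)
lemma mConst_add: "mConst (a + b) = mConst a + mConst b" by (simp add: mConst_def single_add)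
lemma mConst_uminus: "mConst (- a) = - mConst a" by (simp add: mConst_def single_uminus)
lemma mConst_mult: "mConst (a * b) = mConst a * mConst b" by (simp add: mConst_def mult_single)

lemma msubst_add: "msubst s (p + q) = msubst s p + msubst s q"
  unfolding msubst_MM
  by (rule setsum_keys_plus_distrib) (simp_all add: mConst_add distrib_right)

lemma msubst_zero[simp]: "msubst s 0 = 0" by (simp add: msubst_def)

lemma msubst_single: "msubst s (Poly_Mapping.single m c) = mConst c * MM s m"
  by (simp add: msubst_MM)

lemma msubst_sum: "msubst s (sum f A) = (\<Sum>x\<in>A. msubst s (f x))"
  by (induction A rule: infinite_finite_induct) (simp_all add: msubst_add)

lemma poly_expand: "p = (\<Sum>m\<in>Poly_Mapping.keys p. Poly_Mapping.single m (Poly_Mapping.lookup p m))"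
  by (rule poly_mapping_eqI) (simp add: lookup_sum lookup_single when_def in_keys_iff)

lemma msubst_mult: "msubst s (p * q) = msubst s p * msubst s q"
proof -
  let ?P = "Poly_Mapping.keys p" and ?Q = "Poly_Mapping.keys q"
  have "p * q = (\<Sum>a\<in>?P. Poly_Mapping.single a (Poly_Mapping.lookup p a)) * (\<Sum>b\<in>?Q. Poly_Mapping.single b (Poly_Mapping.lookup q b))"
    using poly_expand[of p] poly_expand[of q] by simp
  also have "\<dots> = (\<Sum>a\<in>?P. \<Sum>b\<in>?Q. Poly_Mapping.single (a+b) (Poly_Mapping.lookup p a * Poly_Mapping.lookup q b))"
    by (simp add: sum_product mult_single)
  finally have "msubst s (p*q) = (\<Sum>a\<in>?P. \<Sum>b\<in>?Q. (mConst (Poly_Mapping.lookup p a) * MM s a) * (mConst (Poly_Mapping.lookup q b) * MM s b))"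
    by (simp add: msubst_sum msubst_single MM_add mConst_mult mult_ac)
  also have "\<dots> = msubst s p * msubst s q"
    by (simp add: msubst_MM sum_product)
  finally show ?thesis .
qed

lemma msubst_const[simp]: "msubst s (mConst c) = mConst c"
  by (simp add: mConst_def msubst_single)
lemma msubst_one[simp]: "msubst s 1 = 1"
  using msubst_const[of s 1] by simp
lemma msubst_var[simp]: "msubst s (mVar i) = s i"
  by (simp add: mVar_def msubst_single MM_def)
lemma msubst_uminus: "msubst s (- p) = - msubst s p"
  by (metis add_eq_0_iff msubst_add msubst_zero add.commute add.right_inverse)
lemma msubst_diff: "msubst s (p - q) = msubst s p - msubst s q"
  by (simp add: msubst_add msubst_uminus diff_conv_add_uminus del: add_uminus_conv_diff)
lemma msubst_power: "msubst s (p ^ k) = msubst s p ^ k"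
  by (induction k) (simp_all add: msubst_mult)


lemma in_vars_var[simp]: "in_vars n (mVar i :: 'a::comm_ring_1 mpoly) \<longleftrightarrow> i < n"
  by (auto simp: in_vars_def mVar_def)
lemma in_vars_const[simp]: "in_vars n (mConst c)"
  by (auto simp: in_vars_def mConst_def)
lemma in_vars_add: "in_vars n p \<Longrightarrow> in_vars n q \<Longrightarrow> in_vars n (p + q)"
proof -
  assume a: "in_vars n p" "in_vars n q"
  show ?thesis unfolding in_vars_def
  proof (intro ballI)
    fix m i assume "m \<in> Poly_Mapping.keys (p + q)" "i \<in> Poly_Mapping.keys m"
    then show "i < n" using a keys_add[of p q] unfolding in_vars_def by blast
  qed
qed
lemma in_vars_mult: "in_vars n p \<Longrightarrow> in_vars n q \<Longrightarrow> in_vars n (p * q)"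
proof -
  assume a: "in_vars n p" "in_vars n q"
  show ?thesis unfolding in_vars_def
  proof (intro ballI)
    fix m i assume m: "m \<in> Poly_Mapping.keys (p * q)" and i: "i \<in> Poly_Mapping.keys m"
    obtain u v where uv: "m = u + v" "u \<in> Poly_Mapping.keys p" "v \<in> Poly_Mapping.keys q"
      using keys_mult[of p q] m by blast
    have "i \<in> Poly_Mapping.keys u \<or> i \<in> Poly_Mapping.keys v" using i uv(1) keys_add_nat by blast
    then show "i < n" using a uv unfolding in_vars_def by blast
  qed
qed
lemma in_vars_one[simp]: "in_vars n 1"
  using in_vars_const[of n 1] by simp
lemma in_vars_power: "in_vars n p \<Longrightarrow> in_vars n (p ^ k)"
  by (induction k) (simp_all add: in_vars_mult)

lemmas ms = msubst_add msubst_diff msubst_uminus msubst_mult msubst_power mConst_uminus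

definition tr :: "nat \<Rightarrow> nat \<Rightarrow> nat \<Rightarrow> nat" where
  "tr p q x = (if x = p then q else if x = q then p else x)"

lemma tr_tr[simp]: "tr p q (tr p q x) = x" by (simp add: tr_def)
lemma tr_eq_iff[simp]: "tr p q x = tr p q y \<longleftrightarrow> x = y" by (auto simp: tr_def)
lemma tr_eq_iff2: "tr p q x = y \<longleftrightarrow> x = tr p q y" by (auto simp: tr_def)
lemma tr_less: "p < n \<Longrightarrow> q < n \<Longrightarrow> tr p q x < n \<longleftrightarrow> x < n" by (auto simp: tr_def)

definition sw :: "nat \<Rightarrow> nat \<Rightarrow> nat \<Rightarrow> 'a::comm_ring_1 mpoly" where
  "sw p q = (\<lambda>m. mVar (tr p q m))"

lemma sum_delta_var: "(\<Sum>j<n. mConst (if j = t then 1 else 0) * (mVar j :: 'a::comm_ring_1 mpoly)) = (if t < n then mVar t else 0)"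
proof -
  have "(\<Sum>j<n. mConst (if j = t then 1 else 0) * (mVar j :: 'a mpoly)) = (\<Sum>j<n. if j = t then mVar j else 0)"
    by (rule sum.cong) auto
  then show ?thesis by (simp add: sum.delta')
qed

lemma sw_comp: "mcomp (sw p q) (sw p q) = (mVar :: nat \<Rightarrow> 'a::comm_ring_1 mpoly)"
  by (simp add: mcomp_def sw_def)

lemma sw_endo: "p < n \<Longrightarrow> q < n \<Longrightarrow> is_endo n (sw p q :: nat \<Rightarrow> 'a::comm_ring_1 mpoly)"
  by (auto simp: is_endo_def sw_def tr_less) (auto simp: tr_def)

lemma sw_lin: "p < n \<Longrightarrow> q < n \<Longrightarrow> is_linear_aut n (sw p q :: nat \<Rightarrow> 'a::comm_ring_1 mpoly)"
  unfolding is_linear_aut_def is_aut_def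
  apply (intro conjI)
    apply (simp add: sw_endo)
   apply (rule exI[of _ "sw p q"]) apply (simp add: sw_endo sw_comp)
  apply (rule exI[of _ "\<lambda>m j. if j = tr p q m then 1 else 0"])
  apply (simp add: sum_delta_var tr_less sw_def)
  done

definition gq :: "nat \<Rightarrow> nat \<Rightarrow> nat \<Rightarrow> 'a::comm_ring_1 \<Rightarrow> nat \<Rightarrow> 'a mpoly" where
  "gq i l j c = mVar(i := mVar i + mConst c * mVar l * mVar j)"

lemma gq_conj: "mcomp (mcomp (sw p q) (gq i l j c)) (sw p q) = gq (tr p q i) (tr p q l) (tr p q j) c"
proof (rule ext)
  fix m
  show "mcomp (mcomp (sw p q) (gq i l j c)) (sw p q) m = gq (tr p q i) (tr p q l) (tr p q j) c m"
    by (cases "m = tr p q i") (simp_all add: mcomp_def sw_def gq_def msubst_add msubst_mult tr_eq_iff2)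
qed

lemma gq_endo: "i < n \<Longrightarrow> l < n \<Longrightarrow> j < n \<Longrightarrow> is_endo n (gq i l j c)"
  by (auto simp: is_endo_def gq_def in_vars_add in_vars_mult)

lemma gq_G_conj: "gq i l j c \<in> G_psi T n \<Longrightarrow> p < n \<Longrightarrow> q < n \<Longrightarrow> gq (tr p q i) (tr p q l) (tr p q j) c \<in> G_psi T n"
  by (metis gq_conj G_psi.comp G_psi.lin sw_lin)

lemma psi_gq: "psi T = gq 0 1 2 1"
  by (simp add: psi_def gq_def)

lemma gq_all: assumes "a < n" "b < n" "c < n" "a \<noteq> b" "a \<noteq> c" "b \<noteq> c" "n \<ge> 3"
  shows "gq a b c (1::'a::comm_ring_1) \<in> G_psi TYPE('a) n"
proof -
  have "gq 0 1 2 (1::'a) \<in> G_psi TYPE('a) n" using G_psi.gen[of "TYPE('a)" n] psi_gq by metis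
  then have "gq (tr 0 a 0) (tr 0 a 1) (tr 0 a 2) (1::'a) \<in> G_psi TYPE('a) n"
    using assms by (intro gq_G_conj) auto
  then have 1: "gq a (tr 0 a 1) (tr 0 a 2) (1::'a) \<in> G_psi TYPE('a) n" by (simp add: tr_def)
  define b1 where "b1 = tr 0 a 1"
  define c1 where "c1 = tr 0 a 2"
  have d1: "b1 \<noteq> a" "c1 \<noteq> a" "b1 \<noteq> c1" "b1 < n" "c1 < n" using assms by (auto simp: b1_def c1_def tr_def)
  have "gq (tr b1 b a) (tr b1 b b1) (tr b1 b c1) (1::'a) \<in> G_psi TYPE('a) n"
    using 1 d1 assms by (intro gq_G_conj) (auto simp: b1_def c1_def)
  then have 2: "gq a b (tr b1 b c1) (1::'a) \<in> G_psi TYPE('a) n" using d1 assms by (simp add: tr_def)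
  define c2 where "c2 = tr b1 b c1"
  have d2: "c2 \<noteq> a" "c2 \<noteq> b" "c2 < n" using d1 assms by (auto simp: c2_def tr_def)
  have "gq (tr c2 c a) (tr c2 c b) (tr c2 c c2) (1::'a) \<in> G_psi TYPE('a) n"
    using 2 d2 assms by (intro gq_G_conj) (auto simp: c2_def)
  then show ?thesis using d2 assms by (simp add: tr_def)
qed


lemma gq_neg: assumes "gq a b c (1::'a::comm_ring_1) \<in> G_psi T n" "a < n" "b < n" "c < n" "a \<noteq> b" "a \<noteq> c"
  shows "gq a b c (-1::'a) \<in> G_psi T n"
proof (rule G_psi.inv[OF assms(1)])
  show "is_endo n (gq a b c (-1::'a))" using assms by (simp add: gq_endo)
  show "mcomp (gq a b c 1) (gq a b c (-1::'a)) = mVar"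
  proof (rule ext)
    fix m show "mcomp (gq a b c 1) (gq a b c (-1::'a)) m = mVar m"
      using assms by (cases "m = a") (simp_all add: mcomp_def gq_def ms)
  qed
  show "mcomp (gq a b c (-1::'a)) (gq a b c 1) = mVar"
  proof (rule ext)
    fix m show "mcomp (gq a b c (-1::'a)) (gq a b c 1) m = mVar m"
      using assms by (cases "m = a") (simp_all add: mcomp_def gq_def ms)
  qed
qed

lemma phi_inv: assumes "i \<noteq> j"
  shows "mcomp (phi i j k \<beta>) (phi i j k (-\<beta>)) = (mVar :: nat \<Rightarrow> 'a::comm_ring_1 mpoly)"
proof (rule ext)
  fix m show "mcomp (phi i j k \<beta>) (phi i j k (-\<beta>)) m = (mVar m :: 'a mpoly)"
    using assms by (cases "m = i") (simp_all add: mcomp_def phi_def ms)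
qed

lemma phi_endo: "i < n \<Longrightarrow> j < n \<Longrightarrow> is_endo n (phi i j k \<beta>)"
  by (auto simp: is_endo_def phi_def in_vars_add in_vars_mult in_vars_power)

lemma sum_delta_var2: "(\<Sum>j<n. mConst (if j = t then c else 0) * (mVar j :: 'a::comm_ring_1 mpoly)) = (if t < n then mConst c * mVar t else 0)"
proof -
  have "(\<Sum>j<n. mConst (if j = t then c else 0) * (mVar j :: 'a mpoly)) = (\<Sum>j<n. if j = t then mConst c * mVar j else 0)"
    by (rule sum.cong) auto
  then show ?thesis by (simp add: sum.delta')
qed

lemma phi_lin: assumes "i < n" "j < n" "i \<noteq> j"
  shows "is_linear_aut n (phi i j 1 (\<beta>::'a::comm_ring_1))"
  unfolding is_linear_aut_def is_aut_def
proof (intro conjI exI allI impI)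
  show "is_endo n (phi i j 1 \<beta>)" using assms by (simp add: phi_endo)
  show "is_endo n (phi i j 1 (-\<beta>))" using assms by (simp add: phi_endo)
  show "mcomp (phi i j 1 \<beta>) (phi i j 1 (- \<beta>)) = mVar" using assms by (simp add: phi_inv)
  show "mcomp (phi i j 1 (- \<beta>)) (phi i j 1 \<beta>) = mVar" using assms phi_inv[of i j 1 "-\<beta>"] by simp
  fix m assume m: "m < n"
  have "(\<Sum>j'<n. mConst ((if j' = m then 1 else 0) + (if j' = j then (if m = i then \<beta> else 0) else 0)) * mVar j')
     = (\<Sum>j'<n. mConst (if j' = m then 1 else 0) * mVar j') + (\<Sum>j'<n. mConst (if j' = j then (if m = i then \<beta> else 0) else 0) * (mVar j' :: 'a mpoly))"
    by (simp add: mConst_add distrib_right sum.distrib)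
  also have "\<dots> = phi i j 1 \<beta> m"
    using assms m by (simp only: sum_delta_var sum_delta_var2) (simp add: phi_def)
  finally show "phi i j 1 \<beta> m = (\<Sum>j'<n. mConst ((if j' = m then 1 else 0) + (if j' = j then (if m = i then \<beta> else 0) else 0)) * mVar j')"
    by simp
qed

lemma commutator: assumes "i \<noteq> l" "i \<noteq> j" "l \<noteq> j"
  shows "mcomp (mcomp (mcomp (phi l j k \<beta>) (gq i l j 1)) (phi l j k (-\<beta>))) (gq i l j (-1))
     = phi i j (Suc k) (\<beta>::'a::comm_ring_1)"
proof (rule ext)
  fix m
  show "mcomp (mcomp (mcomp (phi l j k \<beta>) (gq i l j 1)) (phi l j k (-\<beta>))) (gq i l j (-1)) m = phi i j (Suc k) \<beta> m"
  proof (cases "m = i")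
    case True then show ?thesis using assms
      by (simp add: mcomp_def phi_def gq_def ms algebra_simps)
  next
    case False then show ?thesis using assms
      by (cases "m = l") (simp_all add: mcomp_def phi_def gq_def ms)
  qed
qed


lemma phi_all: assumes "n \<ge> 3"
  shows "i < n \<Longrightarrow> j < n \<Longrightarrow> i \<noteq> j \<Longrightarrow> phi i j (Suc k) (\<beta>::'a::comm_ring_1) \<in> G_psi TYPE('a) n"
proof (induction k arbitrary: i j \<beta>)
  case 0
  then show ?case using phi_lin[of i n j \<beta>] G_psi.lin by (metis One_nat_def)
next
  case (Suc k)
  define l :: nat where "l = (if 0 \<noteq> i \<and> 0 \<noteq> j then 0 else if 1 \<noteq> i \<and> 1 \<noteq> j then 1 else 2)"
  have l: "l < 3" "l \<noteq> i" "l \<noteq> j" using Suc.prems unfolding l_def by auto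
  have ln: "l < n" using l assms by simp
  have b: "phi l j (Suc k) \<beta> \<in> G_psi TYPE('a) n" using Suc.IH ln Suc.prems l by blast
  have bi: "phi l j (Suc k) (-\<beta>) \<in> G_psi TYPE('a) n" using Suc.IH ln Suc.prems l by blast
  have a: "gq i l j (1::'a) \<in> G_psi TYPE('a) n" using gq_all Suc.prems ln l assms by metis
  have ai: "gq i l j (-1::'a) \<in> G_psi TYPE('a) n" using gq_neg[OF a] Suc.prems ln l by metis
  show ?case using commutator[of i l j "Suc k" \<beta>] Suc.prems l G_psi.comp[OF G_psi.comp[OF G_psi.comp[OF b a] bi] ai]
    by simp
qed

theorem mainTheorem4:
  fixes n :: nat
  assumes "CHAR('a::alg_closed_field) > 0"
    and "CHAR('a) \<noteq> 2"
    and "n \<ge> 4"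
  shows "(\<forall>i<n. psi_i TYPE('a) n i \<in> G_psi TYPE('a) n)
       \<and> (\<forall>i<n. \<forall>j<n. \<forall>k::nat. \<forall>\<beta>::'a. j \<noteq> i \<longrightarrow> k \<ge> 1
            \<longrightarrow> phi i j k \<beta> \<in> G_psi TYPE('a) n)"
proof (intro conjI allI impI)
  fix i assume i: "i < n"
  have d: "(i+1) mod n < n \<and> (i+2) mod n < n \<and> (i+1) mod n \<noteq> i \<and> (i+2) mod n \<noteq> i \<and> (i+1) mod n \<noteq> (i+2) mod n"
  proof -
    consider "i + 2 < n" | "i + 2 = n" | "i + 1 = n" using i by linarith
    then show ?thesis
    proof cases
      case 1
      then have "(i+1) mod n = i+1" "(i+2) mod n = i+2" by simp_all
      then show ?thesis using 1 by simp
    next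
      case 2
      then have "(i+1) mod n = i+1" "(i+2) mod n = 0" by simp_all
      then show ?thesis using 2 assms(3) by simp
    next
      case 3
      then have "(i+1) mod n = 0" "(i+2) mod n = 1"
        using assms(3) by (simp_all add: mod_Suc)
      then show ?thesis using 3 assms(3) by simp
    qed
  qed
  have "psi_i TYPE('a) n i = gq i ((i+1) mod n) ((i+2) mod n) 1"
    by (simp add: psi_i_def gq_def)
  moreover have "gq i ((i+1) mod n) ((i+2) mod n) (1::'a) \<in> G_psi TYPE('a) n"
    using d i assms(3) by (intro gq_all) auto
  ultimately show "psi_i TYPE('a) n i \<in> G_psi TYPE('a) n" by simp
next
  fix i j k :: nat and \<beta> :: 'a
  assume "i < n" "j < n" "j \<noteq> i" "1 \<le> k"
  then show "phi i j k \<beta> \<in> G_psi TYPE('a) n"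
    using phi_all[of n i j "k - 1" \<beta>] assms(3) by simp
qed

end
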